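(* Let $L$ be a distributive lattice, let $B$ be the Boolean algebra generated by $L$, let $n\ge1$, and for each $i\in[n]$ let $a_i,b_i\in L$ with $a_i<b_i$. For $I\subseteq[n]$ let $\widehat{\mathbf e}_I\in L^n$ have $i$-th component $b_i$ if $i\in I$ and $a_i$ if $i\notin I$, and let $D=\{\widehat{\mathbf e}_I: I\subseteq[n]\}$. Let $f\colon D\to L$ be monotone and satisfy $$f(\widehat{\mathbf e}_{I\cup\{k\}})\wedge a_k\le f(\widehat{\mathbf e}_I)\le f(\widehat{\mathbf e}_{I\setminus\{k\}})\vee b_k\quad\text{for all } I\subseteq[n],\ k\in[n].$$ Let $p$ be the $n$-ary polynomial function over $B$ given by $p(\mathbf x)=\bigvee_{I\subseteq[n]}(c_I\wedge\bigwedge_{i\in I}x_i)$ for a monotone system of coefficients $c_I\in B$ ($I\subseteq[n]$). Then the following are equivalent: (i) $p|_D=f$; (ii) $c_I^-\le c_I\le c_I^+$ for all $I\subseteq[n]$; (iii) $p^-(\mathbf x)\le p(\mathbf x)\le p^+(\mathbf x)$ for all $\mathbf x\in L^n$.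
   Context: $B$ is the Boolean algebra generated by $L$ in which $L$ embeds (Birkhoff–Priestley), with bounds $0,1$ and complement $x\mapsto x'$. A system of coefficients is monotone if $I\subseteq J$ implies $c_I\le c_J$. $f$ monotone means $I\subseteq J\Rightarrow f(\widehat{\mathbf e}_I)\le f(\widehat{\mathbf e}_J)$. Define $c_I^-=f(\widehat{\mathbf e}_I)\wedge\bigwedge_{i\notin I}a_i'$ and $c_I^+=f(\widehat{\mathbf e}_I)\vee\bigvee_{i\in I}b_i'$ in $B$, and let $p^-(\mathbf x)=\bigvee_{I\subseteq[n]}(c_I^-\wedge\bigwedge_{i\in I}x_i)$, $p^+(\mathbf x)=\bigvee_{I\subseteq[n]}(c_I^+\wedge\bigwedge_{i\in I}x_i)$, polynomial functions over $B$. *)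

theory Defs
  imports Main
begin

text \<open>L is a sublattice of the Boolean algebra B (the ambient type), and B is generated by L.\<close>

definition sublattice :: "'b::boolean_algebra set \<Rightarrow> bool" where
  "sublattice L \<longleftrightarrow> L \<noteq> {} \<and> (\<forall>x\<in>L. \<forall>y\<in>L. inf x y \<in> L \<and> sup x y \<in> L)"

inductive_set bool_gen :: "'b::boolean_algebra set \<Rightarrow> 'b set" for L where
  gen_base: "x \<in> L \<Longrightarrow> x \<in> bool_gen L"
| gen_bot: "bot \<in> bool_gen L"
| gen_top: "top \<in> bool_gen L"
| gen_compl: "x \<in> bool_gen L \<Longrightarrow> - x \<in> bool_gen L"
| gen_inf: "x \<in> bool_gen L \<Longrightarrow> y \<in> bool_gen L \<Longrightarrow> inf x y \<in> bool_gen L"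
| gen_sup: "x \<in> bool_gen L \<Longrightarrow> y \<in> bool_gen L \<Longrightarrow> sup x y \<in> bool_gen L"

definition binf :: "'b::bounded_lattice set \<Rightarrow> 'b" where
  "binf A = Finite_Set.fold inf top A"

definition bsup :: "'b::bounded_lattice set \<Rightarrow> 'b" where
  "bsup A = Finite_Set.fold sup bot A"

text \<open>Indices [n] = {1..n}; vectors are functions nat => 'b, only components in [n] matter.\<close>
definition ehat :: "(nat \<Rightarrow> 'b) \<Rightarrow> (nat \<Rightarrow> 'b) \<Rightarrow> nat set \<Rightarrow> nat \<Rightarrow> 'b" where
  "ehat a b I = (\<lambda>i. if i \<in> I then b i else a i)"

definition polyfun :: "nat \<Rightarrow> (nat set \<Rightarrow> 'b::boolean_algebra) \<Rightarrow> (nat \<Rightarrow> 'b) \<Rightarrow> 'b" where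
  "polyfun n c x = bsup ((\<lambda>I. inf (c I) (binf (x ` I))) ` Pow {1..n})"

definition cminus :: "nat \<Rightarrow> (nat \<Rightarrow> 'b::boolean_algebra) \<Rightarrow> (nat \<Rightarrow> 'b) \<Rightarrow> ((nat \<Rightarrow> 'b) \<Rightarrow> 'b) \<Rightarrow> nat set \<Rightarrow> 'b" where
  "cminus n a b f I = inf (f (ehat a b I)) (binf ((\<lambda>i. - a i) ` ({1..n} - I)))"

definition cplus :: "nat \<Rightarrow> (nat \<Rightarrow> 'b::boolean_algebra) \<Rightarrow> (nat \<Rightarrow> 'b) \<Rightarrow> ((nat \<Rightarrow> 'b) \<Rightarrow> 'b) \<Rightarrow> nat set \<Rightarrow> 'b" where
  "cplus n a b f I = sup (f (ehat a b I)) (bsup ((\<lambda>i. - b i) ` I))"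

end

theory Submission
  imports Defs
begin


lemma binf_empty[simp]: "binf {} = top" by (simp add: binf_def)
lemma binf_insert[simp]: "finite A \<Longrightarrow> binf (insert x A) = inf x (binf A)"
  unfolding binf_def by (simp add: comp_fun_idem_on.fold_insert_idem[OF comp_fun_idem_inf[unfolded comp_fun_idem_def']])
lemma bsup_empty[simp]: "bsup {} = bot" by (simp add: bsup_def)
lemma bsup_insert[simp]: "finite A \<Longrightarrow> bsup (insert x A) = sup x (bsup A)"
  unfolding bsup_def by (simp add: comp_fun_idem_on.fold_insert_idem[OF comp_fun_idem_sup[unfolded comp_fun_idem_def']])

lemma le_binf_iff: "finite A \<Longrightarrow> (x \<le> binf A) = (\<forall>a\<in>A. x \<le> a)"
  by (induction A rule: finite_induct) auto
lemma bsup_le_iff: "finite A \<Longrightarrow> (bsup A \<le> x) = (\<forall>a\<in>A. a \<le> x)"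
  by (induction A rule: finite_induct) auto
lemma binf_le: "finite A \<Longrightarrow> a \<in> A \<Longrightarrow> binf A \<le> a"
  using le_binf_iff by blast
lemma le_bsup: "finite A \<Longrightarrow> a \<in> A \<Longrightarrow> a \<le> bsup A"
  using bsup_le_iff by blast

lemma polyfun_le_iff: "(polyfun n c x \<le> y) = (\<forall>I\<subseteq>{1..n}. inf (c I) (binf (x ` I)) \<le> y)"
  unfolding polyfun_def by (subst bsup_le_iff) auto
lemma le_polyfun: "I \<subseteq> {1..n} \<Longrightarrow> y \<le> inf (c I) (binf (x ` I)) \<Longrightarrow> y \<le> polyfun n c x"
  unfolding polyfun_def by (rule order_trans[OF _ le_bsup[where a="inf (c I) (binf (x ` I))"]]) auto

lemma polyfun_mono_c: "(\<And>I. I \<subseteq> {1..n} \<Longrightarrow> c1 I \<le> c2 I) \<Longrightarrow> polyfun n c1 x \<le> polyfun n c2 x"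
  unfolding polyfun_le_iff
  by (metis (no_types, lifting) inf_mono le_polyfun order_refl)

lemma polyfun_mono_x: "(\<And>i. i \<in> {1..n} \<Longrightarrow> x i \<le> y i) \<Longrightarrow> polyfun n c x \<le> polyfun n c y"
  unfolding polyfun_le_iff
proof (intro allI impI)
  fix I assume "\<And>i. i \<in> {1..n} \<Longrightarrow> x i \<le> y i" "I \<subseteq> {1..n}"
  moreover have fI: "finite I" using \<open>I \<subseteq> {1..n}\<close> finite_subset by blast
  ultimately have "binf (x ` I) \<le> binf (y ` I)"
    by (auto simp: le_binf_iff intro!: order_trans[OF binf_le])
  then show "inf (c I) (binf (x ` I)) \<le> polyfun n c y"
    using \<open>I \<subseteq> {1..n}\<close> by (intro le_polyfun) (auto intro: le_infI2)
qed

lemma split_le: "inf x y \<le> z \<Longrightarrow> inf x (- y) \<le> z \<Longrightarrow> (x::'b::boolean_algebra) \<le> z"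
proof -
  assume "inf x y \<le> z" "inf x (- y) \<le> z"
  hence "sup (inf x y) (inf x (-y)) \<le> z" by simp
  moreover have "sup (inf x y) (inf x (-y)) = x" by (simp flip: inf_sup_distrib1)
  ultimately show ?thesis by simp
qed

lemma ehat_in: "i \<in> I \<Longrightarrow> ehat a b I i = b i" and ehat_out: "i \<notin> I \<Longrightarrow> ehat a b I i = a i"
  by (auto simp: ehat_def)

locale thm_setup =
  fixes n :: nat and a b :: "nat \<Rightarrow> 'b::boolean_algebra" and f :: "(nat \<Rightarrow> 'b) \<Rightarrow> 'b"
  assumes ab: "\<forall>i\<in>{1..n}. a i \<le> b i"
    and f_mono: "\<forall>I J. I \<subseteq> J \<and> J \<subseteq> {1..n} \<longrightarrow> f (ehat a b I) \<le> f (ehat a b J)"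
    and f_cond: "\<forall>I k. I \<subseteq> {1..n} \<and> k \<in> {1..n} \<longrightarrow>
        inf (f (ehat a b (I \<union> {k}))) (a k) \<le> f (ehat a b I)
        \<and> f (ehat a b I) \<le> sup (f (ehat a b (I - {k}))) (b k)"
begin

lemma e_le: "J \<subseteq> {1..n} \<Longrightarrow> i \<in> {1..n} \<Longrightarrow> ehat a b J i \<le> b i"
  using ab by (auto simp: ehat_def)

lemma e_mono: "J \<subseteq> K \<Longrightarrow> i \<in> {1..n} \<Longrightarrow> ehat a b J i \<le> ehat a b K i"
  using ab by (auto simp: ehat_def)


lemma f_down: "D \<subseteq> I \<Longrightarrow> I \<subseteq> {1..n} \<Longrightarrow> inf (f (ehat a b I)) (binf (a ` D)) \<le> f (ehat a b (I - D))"
proof -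
  assume DI: "D \<subseteq> I" and In: "I \<subseteq> {1..n}"
  have "finite D" using DI In by (meson finite_atLeastAtMost finite_subset subset_trans)
  then show ?thesis using DI
  proof (induction D rule: finite_induct)
    case empty then show ?case by simp
  next
    case (insert k D)
    have IH: "inf (f (ehat a b I)) (binf (a ` D)) \<le> f (ehat a b (I - D))" using insert.IH insert.prems by blast
    have kI: "k \<in> I" using insert.IH insert.prems by blast
    have eq: "(I - D - {k}) \<union> {k} = I - D" using kI insert(2) by auto
    have "inf (f (ehat a b ((I - D - {k}) \<union> {k}))) (a k) \<le> f (ehat a b (I - D - {k}))"
      using f_cond[rule_format, of "I - D - {k}" k] kI In by blast
    hence fc: "inf (f (ehat a b (I - D))) (a k) \<le> f (ehat a b (I - D - {k}))" using eq by simp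
    have "inf (f (ehat a b I)) (binf (a ` insert k D)) = inf (f (ehat a b I)) (inf (a k) (binf (a ` D)))"
      using insert(1) by simp
    also have "\<dots> \<le> inf (f (ehat a b (I - D))) (a k)"
    proof (rule le_infI)
      show "inf (f (ehat a b I)) (inf (a k) (binf (a ` D))) \<le> f (ehat a b (I - D))"
        by (rule order_trans[OF _ IH]) (simp add: le_infI2)
      show "inf (f (ehat a b I)) (inf (a k) (binf (a ` D))) \<le> a k"
        by (simp add: le_infI2)
    qed
    also have "\<dots> \<le> f (ehat a b (I - insert k D))" using fc by (metis Diff_insert2 Diff_insert)
    finally show ?case .
  qed
qed


lemma A_le:
  assumes hc: "\<forall>I. I \<subseteq> {1..n} \<longrightarrow> c I \<le> cplus n a b f I" and J: "J \<subseteq> {1..n}"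
  shows "polyfun n c (ehat a b J) \<le> f (ehat a b J)"
  unfolding polyfun_le_iff
proof (intro allI impI)
  fix I assume I: "I \<subseteq> {1..n}"
  have fI: "finite I" using I by (meson finite_atLeastAtMost finite_subset)
  let ?z = "binf (ehat a b J ` I)"
  let ?s = "bsup ((\<lambda>i. - b i) ` I)"
  have cI: "c I \<le> sup (f (ehat a b I)) ?s" using hc I by (simp add: cplus_def)
  have "?z \<le> b i" if "i \<in> I" for i
  proof -
    have "?z \<le> ehat a b J i" using binf_le[OF finite_imageI[OF fI]] that by blast
    moreover have "ehat a b J i \<le> b i" using e_le[OF J, of i] I that by blast
    ultimately show ?thesis by (rule order_trans)
  qed
  hence s: "?s \<le> - ?z" unfolding bsup_le_iff[OF finite_imageI[OF fI]] by (auto intro: compl_mono)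
  have z: "?z \<le> binf (a ` (I - J))"
    using fI by (auto simp: le_binf_iff intro!: binf_le) (metis ehat_out rev_image_eqI)
  have "inf (c I) ?z \<le> inf (sup (f (ehat a b I)) ?s) ?z" using cI by (rule inf_mono) simp
  also have "\<dots> = sup (inf (f (ehat a b I)) ?z) (inf ?s ?z)" by (simp add: inf_sup_distrib2)
  also have "inf ?s ?z = bot" using s by (metis inf_shunt)
  also have "sup (inf (f (ehat a b I)) ?z) bot \<le> inf (f (ehat a b I)) (binf (a ` (I - J)))"
    using z by (simp add: le_infI2)
  also have "\<dots> \<le> f (ehat a b (I - (I - J)))" by (rule f_down) (use I in auto)
  also have "\<dots> \<le> f (ehat a b J)" using f_mono[rule_format, of "I - (I - J)" J] J by auto
  finally show "inf (c I) ?z \<le> f (ehat a b J)" .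
qed



lemma G1:
  assumes hc: "\<forall>I. I \<subseteq> {1..n} \<longrightarrow> cminus n a b f I \<le> c I" and J: "J \<subseteq> {1..n}"
  shows "J \<subseteq> K \<Longrightarrow> K \<inter> M = {} \<Longrightarrow> K \<union> M \<subseteq> {1..n} \<Longrightarrow>
    inf (f (ehat a b J)) (inf (binf (ehat a b J ` K)) (binf ((\<lambda>i. - a i) ` M))) \<le> polyfun n c (ehat a b J)"
proof (induction "card ({1..n} - (K \<union> M))" arbitrary: K M)
  case 0
  have fK: "finite K" using 0 by (meson finite_atLeastAtMost finite_subset le_sup_iff)
  have "{1..n} - (K \<union> M) = {}" using 0 by (metis card_0_eq finite_Diff finite_atLeastAtMost)
  hence M: "M = {1..n} - K" using 0 by blast
  have K: "K \<subseteq> {1..n}" using 0 by blast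
  have "f (ehat a b J) \<le> f (ehat a b K)" using f_mono[rule_format, of J K] 0 K by blast
  hence "inf (f (ehat a b J)) (binf ((\<lambda>i. - a i) ` M)) \<le> cminus n a b f K"
    unfolding cminus_def M by (rule inf_mono) simp
  also have "\<dots> \<le> c K" using hc K by blast
  finally have cK: "inf (f (ehat a b J)) (binf ((\<lambda>i. - a i) ` M)) \<le> c K" .
  show ?case
  proof (rule le_polyfun[OF K])
    show "inf (f (ehat a b J)) (inf (binf (ehat a b J ` K)) (binf ((\<lambda>i. - a i) ` M)))
      \<le> inf (c K) (binf (ehat a b J ` K))"
      using cK by (simp add: le_infI1 le_infI2 inf_le1 inf_le2 order_trans[OF _ cK] inf.assoc inf.commute inf.left_commute)
  qed
next
  case (Suc m)
  have fin: "finite ({1..n} - (K \<union> M))" by simp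
  obtain k where k: "k \<in> {1..n} - (K \<union> M)" using Suc.hyps(2)
    by (metis card.empty ex_in_conv nat.distinct(1))
  have fK: "finite K" using Suc.prems by (meson finite_atLeastAtMost finite_subset le_sup_iff)
  have fM: "finite M" using Suc.prems by (meson finite_atLeastAtMost finite_subset le_sup_iff)
  have cd: "card ({1..n} - (K \<union> M) - {k}) = m" using Suc.hyps(2) k fin by simp
  have kJ: "k \<notin> J" using k Suc.prems by blast
  let ?x = "inf (f (ehat a b J)) (inf (binf (ehat a b J ` K)) (binf ((\<lambda>i. - a i) ` M)))"
  show ?case
  proof (rule split_le[where y = "a k"])
    have eq1: "{1..n} - (insert k K \<union> M) = {1..n} - (K \<union> M) - {k}" by blast
    have "inf (f (ehat a b J)) (inf (binf (ehat a b J ` insert k K)) (binf ((\<lambda>i. - a i) ` M))) \<le> polyfun n c (ehat a b J)"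
      using Suc.hyps(1)[of "insert k K" M] eq1 cd Suc.prems k by auto
    moreover have "binf (ehat a b J ` insert k K) = inf (a k) (binf (ehat a b J ` K))"
      using fK kJ by (simp add: ehat_out)
    ultimately show "inf ?x (a k) \<le> polyfun n c (ehat a b J)"
      by (simp add: inf.assoc inf.commute inf.left_commute)
  next
    have eq1: "{1..n} - (K \<union> insert k M) = {1..n} - (K \<union> M) - {k}" by blast
    have "inf (f (ehat a b J)) (inf (binf (ehat a b J ` K)) (binf ((\<lambda>i. - a i) ` insert k M))) \<le> polyfun n c (ehat a b J)"
      using Suc.hyps(1)[of K "insert k M"] eq1 cd Suc.prems k by auto
    moreover have "binf ((\<lambda>i. - a i) ` insert k M) = inf (- a k) (binf ((\<lambda>i. - a i) ` M))"
      using fM by simp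
    ultimately show "inf ?x (- a k) \<le> polyfun n c (ehat a b J)"
      by (simp add: inf.assoc inf.commute inf.left_commute)
  qed
qed

end

lemma shunt1: "x \<le> sup y z \<Longrightarrow> inf x (- z) \<le> (y::'b::boolean_algebra)"
proof -
  assume "x \<le> sup y z"
  hence "inf x (-z) \<le> inf (sup y z) (-z)" by (rule inf_mono) simp
  also have "\<dots> = inf y (-z)" by (simp add: inf_sup_distrib2)
  also have "\<dots> \<le> y" by simp
  finally show ?thesis .
qed

lemma shunt2: "inf x (- z) \<le> y \<Longrightarrow> x \<le> sup y (z::'b::boolean_algebra)"
proof -
  assume h: "inf x (- z) \<le> y"
  have "x = sup (inf x (-z)) (inf x z)" by (simp flip: inf_sup_distrib1)
  also have "\<dots> \<le> sup y z" using h by (rule sup_mono) simp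
  finally show ?thesis .
qed

context thm_setup begin


lemma A_ge:
  assumes hc: "\<forall>I. I \<subseteq> {1..n} \<longrightarrow> cminus n a b f I \<le> c I"
  shows "J \<subseteq> {1..n} \<Longrightarrow> f (ehat a b J) \<le> polyfun n c (ehat a b J)"
proof (induction "card J" arbitrary: J rule: less_induct)
  case less
  note J = less.prems
  have fJ: "finite J" using J by (meson finite_atLeastAtMost finite_subset)
  have inner: "\<forall>S. S \<subseteq> J \<longrightarrow> card (J - S) = m \<longrightarrow> inf (f (ehat a b J)) (binf (b ` S)) \<le> polyfun n c (ehat a b J)" for m
  proof (induction m)
    case 0
    show ?case
    proof (intro allI impI)
      fix S assume S: "S \<subseteq> J" "card (J - S) = 0"
      hence "S = J" using fJ by (metis Diff_eq_empty_iff card_0_eq finite_Diff subset_antisym)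
      have "binf (b ` S) = binf (ehat a b J ` J)"
        using \<open>S = J\<close> by (metis ehat_in image_cong)
      moreover have "inf (f (ehat a b J)) (inf (binf (ehat a b J ` J)) (binf ((\<lambda>i. - a i) ` {}))) \<le> polyfun n c (ehat a b J)"
        by (rule G1[OF hc J]) (use J in auto)
      ultimately show "inf (f (ehat a b J)) (binf (b ` S)) \<le> polyfun n c (ehat a b J)" by simp
    qed
  next
    case (Suc m)
    show ?case
    proof (intro allI impI)
      fix S assume S: "S \<subseteq> J" "card (J - S) = Suc m"
      obtain k where k: "k \<in> J - S" using S(2) by (metis card.empty ex_in_conv nat.distinct(1))
      have fS: "finite S" using S fJ finite_subset by blast
      show "inf (f (ehat a b J)) (binf (b ` S)) \<le> polyfun n c (ehat a b J)"
      proof (rule split_le[where y = "b k"])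
        have "J - insert k S = J - S - {k}" by blast
        hence cd: "card (J - insert k S) = m" using S k fJ by simp
        have "inf (f (ehat a b J)) (binf (b ` insert k S)) \<le> polyfun n c (ehat a b J)"
          using Suc.IH S k cd by blast
        thus "inf (inf (f (ehat a b J)) (binf (b ` S))) (b k) \<le> polyfun n c (ehat a b J)"
          using fS by (simp add: inf.assoc inf.commute inf.left_commute)
      next
        have kn: "k \<in> {1..n}" using k J by blast
        have "f (ehat a b J) \<le> sup (f (ehat a b (J - {k}))) (b k)"
          using f_cond[rule_format, of J k] J kn by blast
        hence "inf (f (ehat a b J)) (- b k) \<le> f (ehat a b (J - {k}))" by (rule shunt1)
        also have "\<dots> \<le> polyfun n c (ehat a b (J - {k}))"
        proof (rule less.hyps)
          show "card (J - {k}) < card J" using k fJ by (meson Diff_iff card_Diff1_less)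
          show "J - {k} \<subseteq> {1..n}" using J by blast
        qed
        also have "\<dots> \<le> polyfun n c (ehat a b J)"
          by (rule polyfun_mono_x) (rule e_mono, auto)
        finally show "inf (inf (f (ehat a b J)) (binf (b ` S))) (- b k) \<le> polyfun n c (ehat a b J)"
          by (rule order_trans[rotated]) (simp add: le_infI1 inf_mono)
      qed
    qed
  qed
  have "inf (f (ehat a b J)) (binf (b ` {})) \<le> polyfun n c (ehat a b J)"
    using inner[of "card J", rule_format, of "{}"] by simp
  thus ?case by simp
qed

lemma A_eq:
  assumes "\<forall>I. I \<subseteq> {1..n} \<longrightarrow> cminus n a b f I \<le> c I \<and> c I \<le> cplus n a b f I"
  shows "\<forall>J. J \<subseteq> {1..n} \<longrightarrow> polyfun n c (ehat a b J) = f (ehat a b J)"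
  using A_le[of c] A_ge[of c] assms by (simp add: order_antisym)

lemma B:
  assumes c_mono: "\<forall>I J. I \<subseteq> J \<and> J \<subseteq> {1..n} \<longrightarrow> c I \<le> c J"
    and hp: "\<forall>J. J \<subseteq> {1..n} \<longrightarrow> polyfun n c (ehat a b J) = f (ehat a b J)"
  shows "\<forall>I. I \<subseteq> {1..n} \<longrightarrow> cminus n a b f I \<le> c I \<and> c I \<le> cplus n a b f I"
proof (intro allI impI conjI)
  fix I assume I: "I \<subseteq> {1..n}"
  have fI: "finite I" using I by (meson finite_atLeastAtMost finite_subset)
  let ?z = "binf ((\<lambda>i. - a i) ` ({1..n} - I))"
  have "polyfun n c (ehat a b I) \<le> sup (c I) (- ?z)"
    unfolding polyfun_le_iff
  proof (intro allI impI)
    fix K assume K: "K \<subseteq> {1..n}"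
    have fK: "finite K" using K by (meson finite_atLeastAtMost finite_subset)
    show "inf (c K) (binf (ehat a b I ` K)) \<le> sup (c I) (- ?z)"
    proof (cases "K \<subseteq> I")
      case True
      hence "c K \<le> c I" using c_mono I by blast
      thus ?thesis by (simp add: le_infI1 le_supI1)
    next
      case False
      then obtain k where k: "k \<in> K" "k \<notin> I" by blast
      have "binf (ehat a b I ` K) \<le> ehat a b I k" using binf_le[OF finite_imageI[OF fK]] k by blast
      also have "\<dots> = a k" using k by (simp add: ehat_out)
      also have "a k \<le> - ?z"
      proof (rule compl_le_swap1)
        show "?z \<le> - a k" using k K by (intro binf_le) auto
      qed
      finally show ?thesis by (simp add: le_infI2 le_supI2)
    qed
  qed
  hence "inf (polyfun n c (ehat a b I)) (- (- ?z)) \<le> c I" by (rule shunt1)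
  thus "cminus n a b f I \<le> c I" using hp I by (simp add: cminus_def)
next
  fix I assume I: "I \<subseteq> {1..n}"
  have fI: "finite I" using I by (meson finite_atLeastAtMost finite_subset)
  let ?s = "bsup ((\<lambda>i. - b i) ` I)"
  have "- ?s \<le> binf (ehat a b I ` I)"
    unfolding le_binf_iff[OF finite_imageI[OF fI]]
  proof
    fix y assume "y \<in> ehat a b I ` I"
    then obtain i where i: "i \<in> I" "y = b i" by (auto simp: ehat_in)
    have "- b i \<le> ?s" using i fI by (intro le_bsup) auto
    thus "- ?s \<le> y" using i by (simp add: compl_le_swap2)
  qed
  hence "inf (c I) (- ?s) \<le> inf (c I) (binf (ehat a b I ` I))" by (rule inf_mono[OF order_refl])
  also have "\<dots> \<le> polyfun n c (ehat a b I)" using I by (intro le_polyfun) auto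
  also have "\<dots> = f (ehat a b I)" using hp I by blast
  finally show "c I \<le> cplus n a b f I" unfolding cplus_def by (rule shunt2)
qed

end


theorem theorem3p5:
  fixes L :: "'b::boolean_algebra set"
    and n :: nat
    and a b :: "nat \<Rightarrow> 'b"
    and f :: "(nat \<Rightarrow> 'b) \<Rightarrow> 'b"
    and c :: "nat set \<Rightarrow> 'b"
  assumes L_sub: "sublattice L"
    and B_gen: "bool_gen L = UNIV"
    and n_pos: "n \<ge> 1"
    and ab: "\<forall>i\<in>{1..n}. a i \<in> L \<and> b i \<in> L \<and> a i < b i"
    and f_L: "\<forall>I. I \<subseteq> {1..n} \<longrightarrow> f (ehat a b I) \<in> L"
    and f_mono: "\<forall>I J. I \<subseteq> J \<and> J \<subseteq> {1..n} \<longrightarrow> f (ehat a b I) \<le> f (ehat a b J)"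
    and f_cond: "\<forall>I k. I \<subseteq> {1..n} \<and> k \<in> {1..n} \<longrightarrow>
        inf (f (ehat a b (I \<union> {k}))) (a k) \<le> f (ehat a b I)
        \<and> f (ehat a b I) \<le> sup (f (ehat a b (I - {k}))) (b k)"
    and c_mono: "\<forall>I J. I \<subseteq> J \<and> J \<subseteq> {1..n} \<longrightarrow> c I \<le> c J"
  shows "((\<forall>I. I \<subseteq> {1..n} \<longrightarrow> polyfun n c (ehat a b I) = f (ehat a b I))
          \<longleftrightarrow> (\<forall>I. I \<subseteq> {1..n} \<longrightarrow> cminus n a b f I \<le> c I \<and> c I \<le> cplus n a b f I))
       \<and> ((\<forall>I. I \<subseteq> {1..n} \<longrightarrow> cminus n a b f I \<le> c I \<and> c I \<le> cplus n a b f I)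
          \<longleftrightarrow> (\<forall>x. (\<forall>i\<in>{1..n}. x i \<in> L) \<longrightarrow>
                 polyfun n (cminus n a b f) x \<le> polyfun n c x
                 \<and> polyfun n c x \<le> polyfun n (cplus n a b f) x))"
proof -
  have ab': "\<forall>i\<in>{1..n}. a i \<le> b i" using ab by (simp add: less_imp_le)
  interpret thm_setup n a b f
    using ab' f_mono f_cond by unfold_locales
  have cmc: "\<forall>I. I \<subseteq> {1..n} \<longrightarrow> cminus n a b f I \<le> cminus n a b f I \<and> cminus n a b f I \<le> cplus n a b f I"
    unfolding cminus_def cplus_def by (auto intro: le_supI1 le_infI1)
  have cpc: "\<forall>I. I \<subseteq> {1..n} \<longrightarrow> cminus n a b f I \<le> cplus n a b f I \<and> cplus n a b f I \<le> cplus n a b f I"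
    unfolding cminus_def cplus_def by (auto intro: le_supI1 le_infI1)
  have eL: "\<forall>i\<in>{1..n}. ehat a b J i \<in> L" for J using assms(4) by (simp add: ehat_def)
  show ?thesis
  proof (intro conjI iffI)
    assume "\<forall>I. I \<subseteq> {1..n} \<longrightarrow> polyfun n c (ehat a b I) = f (ehat a b I)"
    thus "\<forall>I. I \<subseteq> {1..n} \<longrightarrow> cminus n a b f I \<le> c I \<and> c I \<le> cplus n a b f I"
      using B c_mono by blast
  next
    assume "\<forall>I. I \<subseteq> {1..n} \<longrightarrow> cminus n a b f I \<le> c I \<and> c I \<le> cplus n a b f I"
    thus "\<forall>I. I \<subseteq> {1..n} \<longrightarrow> polyfun n c (ehat a b I) = f (ehat a b I)"
      by (rule A_eq)
  next
    assume h: "\<forall>I. I \<subseteq> {1..n} \<longrightarrow> cminus n a b f I \<le> c I \<and> c I \<le> cplus n a b f I"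
    show "\<forall>x. (\<forall>i\<in>{1..n}. x i \<in> L) \<longrightarrow>
                 polyfun n (cminus n a b f) x \<le> polyfun n c x
                 \<and> polyfun n c x \<le> polyfun n (cplus n a b f) x"
      using h by (auto intro!: polyfun_mono_c)
  next
    assume h: "\<forall>x. (\<forall>i\<in>{1..n}. x i \<in> L) \<longrightarrow>
                 polyfun n (cminus n a b f) x \<le> polyfun n c x
                 \<and> polyfun n c x \<le> polyfun n (cplus n a b f) x"
    have "\<forall>J. J \<subseteq> {1..n} \<longrightarrow> polyfun n c (ehat a b J) = f (ehat a b J)"
    proof (intro allI impI)
      fix J assume J: "J \<subseteq> {1..n}"
      have "polyfun n (cminus n a b f) (ehat a b J) = f (ehat a b J)"
        using A_eq[OF cmc] J by blast
      moreover have "polyfun n (cplus n a b f) (ehat a b J) = f (ehat a b J)"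
        using A_eq[OF cpc] J by blast
      moreover have "polyfun n (cminus n a b f) (ehat a b J) \<le> polyfun n c (ehat a b J)
                 \<and> polyfun n c (ehat a b J) \<le> polyfun n (cplus n a b f) (ehat a b J)"
        using h eL[of J] by blast
      ultimately show "polyfun n c (ehat a b J) = f (ehat a b J)" by (simp add: order_antisym)
    qed
    thus "\<forall>I. I \<subseteq> {1..n} \<longrightarrow> cminus n a b f I \<le> c I \<and> c I \<le> cplus n a b f I"
      using B c_mono by blast
  qed
qed

end
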